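(* Every even-dimensional finite-dimensional real Lie algebra $\mathfrak g$ with $\dim[\mathfrak g,\mathfrak g]=1$ carries an abelian complex structure.
   Context: An abelian complex structure on a real Lie algebra $\mathfrak g$ is a linear map $J:\mathfrak g\to\mathfrak g$ with $J^2=-\mathrm{Id}$ and $[Jx,Jy]=[x,y]$ for all $x,y\in\mathfrak g$. *)

theory Defs
  imports "HOL-Analysis.Analysis"
begin

text \<open>A real Lie algebra structure on a finite-dimensional real vector space 'a
  (modelled as a euclidean_space; the inner product is irrelevant): a bilinear,
  alternating bracket satisfying the Jacobi identity.\<close>
definition lie_algebra :: "('a::euclidean_space \<Rightarrow> 'a \<Rightarrow> 'a) \<Rightarrow> bool" where
  "lie_algebra br \<longleftrightarrow>
     bilinear br \<and>
     (\<forall>x. br x x = 0) \<and>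
     (\<forall>x y z. br x (br y z) + br y (br z x) + br z (br x y) = 0)"

definition derived_algebra :: "('a::euclidean_space \<Rightarrow> 'a \<Rightarrow> 'a) \<Rightarrow> 'a set" where
  "derived_algebra br = span {br x y | x y. True}"

definition abelian_complex_structure :: "('a::euclidean_space \<Rightarrow> 'a \<Rightarrow> 'a) \<Rightarrow> ('a \<Rightarrow> 'a) \<Rightarrow> bool" where
  "abelian_complex_structure br J \<longleftrightarrow>
     linear J \<and> (\<forall>x. J (J x) = - x) \<and> (\<forall>x y. br (J x) (J y) = br x y)"

end

theory Submission
  imports Defs
begin

lemma lin_facts:
  fixes f :: "'a::real_vector \<Rightarrow> 'b::real_vector"
  assumes "linear f"
  shows "f (x + y) = f x + f y" "f (x - y) = f x - f y" "f (c *\<^sub>R x) = c *\<^sub>R f x" "f 0 = 0"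
  using assms by (auto simp: linear_add linear_diff linear_scale linear_0)

lemma step_dim:
  fixes W :: "'a::euclidean_space set" and a b :: "'a \<Rightarrow> real"
  assumes W: "subspace W" and uW: "u \<in> W" and vW: "v \<in> W"
    and la: "linear a" and lb: "linear b"
    and au: "a u = 1" and av: "a v = 0" and bu: "b u = 0" and bv: "b v = 1"
  shows "subspace {w\<in>W. a w = 0 \<and> b w = 0}"
    and "dim W = dim {w\<in>W. a w = 0 \<and> b w = 0} + 2"
    and "\<And>x. x \<in> W \<Longrightarrow> x - a x *\<^sub>R u - b x *\<^sub>R v \<in> {w\<in>W. a w = 0 \<and> b w = 0}"
proof -
  let ?W' = "{w\<in>W. a w = 0 \<and> b w = 0}"
  note A = lin_facts[OF la] and B = lin_facts[OF lb]
  show sW': "subspace ?W'"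
    using W unfolding subspace_def by (auto simp: A B)
  show P: "\<And>x. x \<in> W \<Longrightarrow> x - a x *\<^sub>R u - b x *\<^sub>R v \<in> ?W'"
    using W uW vW by (auto simp: A B au av bu bv subspace_diff subspace_scale)
  have sS: "subspace (span {u, v})" by simp
  have sum: "{x + y |x y. x \<in> span {u, v} \<and> y \<in> ?W'} = W"
  proof (intro set_eqI iffI)
    fix z assume "z \<in> {x + y |x y. x \<in> span {u, v} \<and> y \<in> ?W'}"
    then obtain x y where "z = x + y" "x \<in> span {u,v}" "y \<in> ?W'" by auto
    moreover have "span {u,v} \<subseteq> W" using W uW vW by (simp add: span_minimal)
    ultimately show "z \<in> W" using W by (auto simp: subspace_add)
  next
    fix z assume z: "z \<in> W"
    have "a z *\<^sub>R u + b z *\<^sub>R v \<in> span {u,v}"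
      by (simp add: span_add span_base span_scale)
    moreover have "z = (a z *\<^sub>R u + b z *\<^sub>R v) + (z - a z *\<^sub>R u - b z *\<^sub>R v)" by simp
    ultimately show "z \<in> {x + y |x y. x \<in> span {u, v} \<and> y \<in> ?W'}"
      using P[OF z] by blast
  qed
  have int: "span {u, v} \<inter> ?W' = {0}"
  proof (intro set_eqI iffI)
    fix z assume "z \<in> span {u, v} \<inter> ?W'"
    then obtain s t where "z = s *\<^sub>R u + t *\<^sub>R v" "a z = 0" "b z = 0"
      by (auto simp: span_insert span_singleton) (metis add.commute diff_add_cancel)
    then show "z \<in> {0}" by (auto simp: A B au av bu bv)
  next
    fix z assume "z \<in> {0::'a}"
    then show "z \<in> span {u, v} \<inter> ?W'" using W by (auto simp: span_zero subspace_0 A B)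
  qed
  have "u \<noteq> 0" using au A by auto
  have "v \<notin> span {u}"
  proof
    assume "v \<in> span {u}"
    then obtain s where "v = s *\<^sub>R u" by (auto simp: span_singleton)
    then show False using bv bu B by auto
  qed
  then have "dim (insert v {u}) = 2"
    using \<open>u \<noteq> 0\<close> by (simp add: dim_insert)
  then have d2: "dim (span {u,v}) = 2"
    by (simp add: insert_commute)
  have "dim W + dim (span {u, v} \<inter> ?W') = dim (span {u,v}) + dim ?W'"
    using dim_sums_Int[OF sS sW'] sum by simp
  then show "dim W = dim ?W' + 2" using int d2 by simp
qed

lemma J_step:
  fixes W :: "'a::euclidean_space set" and a b :: "'a \<Rightarrow> real"
  assumes W: "subspace W" and uW: "u \<in> W" and vW: "v \<in> W"
    and la: "linear a" and lb: "linear b"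
    and au: "a u = 1" and av: "a v = 0" and bu: "b u = 0" and bv: "b v = 1"
    and lJ: "linear J'"
    and J'W: "\<And>x. x \<in> {w\<in>W. a w = 0 \<and> b w = 0} \<Longrightarrow>
          J' x \<in> {w\<in>W. a w = 0 \<and> b w = 0} \<and> J' (J' x) = -x"
  shows "linear (\<lambda>x. a x *\<^sub>R v - b x *\<^sub>R u + J' (x - a x *\<^sub>R u - b x *\<^sub>R v))"
    and "\<And>x. x \<in> W \<Longrightarrow> (\<lambda>x. a x *\<^sub>R v - b x *\<^sub>R u + J' (x - a x *\<^sub>R u - b x *\<^sub>R v)) x \<in> W \<and>
       (\<lambda>x. a x *\<^sub>R v - b x *\<^sub>R u + J' (x - a x *\<^sub>R u - b x *\<^sub>R v))
        ((\<lambda>x. a x *\<^sub>R v - b x *\<^sub>R u + J' (x - a x *\<^sub>R u - b x *\<^sub>R v)) x) = -x"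
proof -
  note A = lin_facts[OF la] and B = lin_facts[OF lb] and C = lin_facts[OF lJ]
  show "linear (\<lambda>x. a x *\<^sub>R v - b x *\<^sub>R u + J' (x - a x *\<^sub>R u - b x *\<^sub>R v))"
    by (rule linearI) (auto simp: A B C algebra_simps)
  fix x assume x: "x \<in> W"
  define p where "p = x - a x *\<^sub>R u - b x *\<^sub>R v"
  have pW: "p \<in> {w\<in>W. a w = 0 \<and> b w = 0}"
    unfolding p_def by (rule step_dim(3)[OF W uW vW la lb au av bu bv x])
  define q where "q = J' p"
  have qW: "q \<in> W" "a q = 0" "b q = 0" "J' q = -p" using J'W[OF pW] unfolding q_def by auto
  define y where "y = a x *\<^sub>R v - b x *\<^sub>R u + q"
  have ay: "a y = - b x" and by': "b y = a x" unfolding y_def using qW by (auto simp: A B au av bu bv)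
  have "y - (- b x) *\<^sub>R u - a x *\<^sub>R v = q" unfolding y_def by (simp add: algebra_simps)
  then have py: "y - a y *\<^sub>R u - b y *\<^sub>R v = q" using ay by' by simp
  have yW: "y \<in> W" unfolding y_def using W uW vW qW
    by (intro subspace_add subspace_diff subspace_scale) auto
  have "a y *\<^sub>R v - b y *\<^sub>R u + J' q = -x"
    unfolding ay by' qW(4) p_def by (simp add: algebra_simps)
  then show "(\<lambda>x. a x *\<^sub>R v - b x *\<^sub>R u + J' (x - a x *\<^sub>R u - b x *\<^sub>R v)) x \<in> W \<and>
       (\<lambda>x. a x *\<^sub>R v - b x *\<^sub>R u + J' (x - a x *\<^sub>R u - b x *\<^sub>R v))
        ((\<lambda>x. a x *\<^sub>R v - b x *\<^sub>R u + J' (x - a x *\<^sub>R u - b x *\<^sub>R v)) x) = -x"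
    using yW py by (simp add: y_def[symmetric] q_def[symmetric] p_def[symmetric])
qed

lemma antisym_form:
  fixes \<omega> :: "'a::real_vector \<Rightarrow> 'a \<Rightarrow> real"
  assumes bil: "bilinear \<omega>" and alt: "\<forall>x. \<omega> x x = 0"
  shows "\<omega> y x = - \<omega> x y"
proof -
  have h: "\<omega> (x + y) (x + y) = \<omega> x x + \<omega> x y + (\<omega> y x + \<omega> y y)"
    by (simp add: bilinear_ladd[OF bil] bilinear_radd[OF bil])
  have "0 = \<omega> x y + \<omega> y x" using h alt by simp
  then show ?thesis by linarith
qed

lemma omega_expand:
  fixes \<omega> :: "'a::real_vector \<Rightarrow> 'a \<Rightarrow> real"
  assumes bil: "bilinear \<omega>" and alt: "\<forall>x. \<omega> x x = 0"
    and uv: "\<omega> u v = 1"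
    and w: "\<omega> u w = 0" "\<omega> w v = 0" and w': "\<omega> u w' = 0" "\<omega> w' v = 0"
  shows "\<omega> (\<alpha> *\<^sub>R u + \<beta> *\<^sub>R v + w) (\<gamma> *\<^sub>R u + \<delta> *\<^sub>R v + w') = \<alpha> * \<delta> - \<beta> * \<gamma> + \<omega> w w'"
proof -
  have as: "\<And>x y. \<omega> y x = - \<omega> x y" using antisym_form[OF bil alt] .
  have "\<omega> v u = -1" "\<omega> w u = 0" "\<omega> v w' = 0" "\<omega> u u = 0" "\<omega> v v = 0"
    using as[of u v] as[of u w] as[of w' v] alt uv w w' by auto
  then show ?thesis using uv w w'
    by (simp add: bilinear_ladd[OF bil] bilinear_radd[OF bil] bilinear_lmul[OF bil] bilinear_rmul[OF bil] algebra_simps)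
qed

lemma main_ind:
  fixes \<omega> :: "'a::euclidean_space \<Rightarrow> 'a \<Rightarrow> real"
  assumes bil: "bilinear \<omega>" and alt: "\<forall>x. \<omega> x x = 0"
  shows "subspace W \<Longrightarrow> dim W = 2*k \<Longrightarrow> \<exists>J. linear J \<and> (\<forall>x\<in>W. J x \<in> W \<and> J (J x) = -x)
     \<and> (\<forall>x\<in>W. \<forall>y\<in>W. \<omega> (J x) (J y) = \<omega> x y)"
proof (induction k arbitrary: W)
  case 0
  then have "W \<subseteq> {0}" by simp
  then show ?case by (intro exI[of _ "\<lambda>x. 0"]) (auto simp: linear_zero)
next
  case (Suc k)
  note W = Suc.prems(1)
  show ?case
  proof (cases "\<exists>u\<in>W. \<exists>v\<in>W. \<omega> u v \<noteq> 0")
    case True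
    then obtain u0 v where u0: "u0 \<in> W" and vW: "v \<in> W" and nz: "\<omega> u0 v \<noteq> 0" by blast
    define u where "u = (1 / \<omega> u0 v) *\<^sub>R u0"
    have uW: "u \<in> W" unfolding u_def using W u0 by (simp add: subspace_scale)
    have uv: "\<omega> u v = 1" unfolding u_def using nz by (simp add: bilinear_lmul[OF bil])
    define a where "a = (\<lambda>x. \<omega> x v)"
    define b where "b = (\<lambda>x. \<omega> u x)"
    have la: "linear a" and lb: "linear b" using bil unfolding a_def b_def bilinear_def by auto
    have au: "a u = 1" and av: "a v = 0" and bu: "b u = 0" and bv: "b v = 1"
      using uv alt unfolding a_def b_def by auto
    let ?W' = "{w\<in>W. a w = 0 \<and> b w = 0}"
    note sd = step_dim[OF W uW vW la lb au av bu bv]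
    have "dim ?W' = 2 * k" using sd(2) Suc.prems(2) by simp
    from Suc.IH[OF sd(1) this] obtain J' where lJ: "linear J'"
      and J'1: "\<forall>x\<in>?W'. J' x \<in> ?W' \<and> J' (J' x) = -x"
      and J'2: "\<forall>x\<in>?W'. \<forall>y\<in>?W'. \<omega> (J' x) (J' y) = \<omega> x y" by blast
    define J where "J = (\<lambda>x. a x *\<^sub>R v - b x *\<^sub>R u + J' (x - a x *\<^sub>R u - b x *\<^sub>R v))"
    have js1: "linear J" and js2: "\<forall>x\<in>W. J x \<in> W \<and> J (J x) = -x"
      using J_step[OF W uW vW la lb au av bu bv lJ] J'1 unfolding J_def by blast+
    have om: "\<omega> (J x) (J y) = \<omega> x y" if x: "x \<in> W" and y: "y \<in> W" for x y
    proof -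
      define px where "px = x - a x *\<^sub>R u - b x *\<^sub>R v"
      define py where "py = y - a y *\<^sub>R u - b y *\<^sub>R v"
      have px: "px \<in> ?W'" unfolding px_def using sd(3)[OF x] .
      have py: "py \<in> ?W'" unfolding py_def using sd(3)[OF y] .
      have jpx: "J' px \<in> ?W'" and jpy: "J' py \<in> ?W'" using J'1 px py by auto
      have ex: "x = a x *\<^sub>R u + b x *\<^sub>R v + px" and ey: "y = a y *\<^sub>R u + b y *\<^sub>R v + py"
        unfolding px_def py_def by simp_all
      have Jx: "J x = (- b x) *\<^sub>R u + a x *\<^sub>R v + J' px" and Jy: "J y = (- b y) *\<^sub>R u + a y *\<^sub>R v + J' py"
        unfolding J_def px_def py_def by simp_all
      have "\<omega> (J x) (J y) = (- b x) * a y - a x * (- b y) + \<omega> (J' px) (J' py)"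
        unfolding Jx Jy
        by (rule omega_expand[OF bil alt uv]) (use jpx jpy in \<open>auto simp: a_def b_def\<close>)
      also have "\<dots> = a x * b y - b x * a y + \<omega> px py" using J'2 px py by simp
      also have "\<dots> = \<omega> x y"
        by (subst (3) ex, subst (3) ey, rule omega_expand[OF bil alt uv, symmetric])
           (use px py in \<open>auto simp: a_def b_def\<close>)
      finally show ?thesis .
    qed
    show ?thesis using js1 js2 om by blast
  next
    case False
    then have zero: "\<forall>x\<in>W. \<forall>y\<in>W. \<omega> x y = 0" by blast
    obtain B where BW: "B \<subseteq> W" and orth: "pairwise orthogonal B"
      and nB: "\<And>x. x \<in> B \<Longrightarrow> norm x = 1" and cB: "card B = dim W"
      using orthonormal_basis_subspace[OF W] by metis
    have "card B \<ge> 2" using cB Suc.prems(2) by simp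
    then have fB: "finite B" "B \<noteq> {}" using card_gt_0_iff[of B] by auto
    then obtain u where uB: "u \<in> B" by blast
    have "card (B - {u}) \<ge> 1" using \<open>card B \<ge> 2\<close> uB fB by simp
    then have "B - {u} \<noteq> {}" by (metis card.empty not_one_le_zero)
    then obtain v where vB: "v \<in> B" and uv: "u \<noteq> v" by blast
    have uW: "u \<in> W" and vW: "v \<in> W" using uB vB BW by auto
    define a where "a = (\<lambda>x. x \<bullet> u)"
    define b where "b = (\<lambda>x. x \<bullet> v)"
    have la: "linear a" and lb: "linear b" unfolding a_def b_def
      by (auto intro!: linearI simp: inner_add_left)
    have au: "a u = 1" and bv: "b v = 1" unfolding a_def b_def using nB uB vB
      by (simp_all add: dot_square_norm)
    have av: "a v = 0" and bu: "b u = 0" unfolding a_def b_def using orth uB vB uv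
      by (auto simp: pairwise_def orthogonal_def inner_commute)
    let ?W' = "{w\<in>W. a w = 0 \<and> b w = 0}"
    note sd = step_dim[OF W uW vW la lb au av bu bv]
    have "dim ?W' = 2 * k" using sd(2) Suc.prems(2) by simp
    from Suc.IH[OF sd(1) this] obtain J' where lJ: "linear J'"
      and J'1: "\<forall>x\<in>?W'. J' x \<in> ?W' \<and> J' (J' x) = -x" by blast
    define J where "J = (\<lambda>x. a x *\<^sub>R v - b x *\<^sub>R u + J' (x - a x *\<^sub>R u - b x *\<^sub>R v))"
    have js1: "linear J" and js2: "\<forall>x\<in>W. J x \<in> W \<and> J (J x) = -x"
      using J_step[OF W uW vW la lb au av bu bv lJ] J'1 unfolding J_def by blast+
    show ?thesis using js1 js2 zero by (intro exI[of _ J]) auto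
  qed
qed

theorem mainTheorem9:
  fixes br :: "'a::euclidean_space \<Rightarrow> 'a \<Rightarrow> 'a"
  assumes "lie_algebra br"
    and "even DIM('a)"
    and "dim (derived_algebra br) = 1"
  shows "\<exists>J. abelian_complex_structure br J"
proof -
  have bil: "bilinear br" and alt: "\<forall>x. br x x = 0" using assms(1) unfolding lie_algebra_def by auto
  obtain B where BD: "B \<subseteq> derived_algebra br" and ind: "independent B"
    and DB: "derived_algebra br \<subseteq> span B" and cB: "card B = dim (derived_algebra br)"
    using basis_exists by blast
  obtain z where Bz: "B = {z}" using cB assms(3) card_1_singletonE by auto
  have z0: "z \<noteq> 0" using ind Bz dependent_zero by blast
  have zz: "z \<bullet> z \<noteq> 0" using z0 by simp
  define \<omega> where "\<omega> = (\<lambda>x y. (br x y \<bullet> z) / (z \<bullet> z))"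
  have rep: "br x y = \<omega> x y *\<^sub>R z" for x y
  proof -
    have "br x y \<in> derived_algebra br" unfolding derived_algebra_def by (rule span_base) blast
    then have "br x y \<in> span {z}" using DB Bz by auto
    then obtain c where c: "br x y = c *\<^sub>R z" by (auto simp: span_singleton)
    then have "\<omega> x y = c" unfolding \<omega>_def using zz by simp
    then show ?thesis using c by simp
  qed
  have bo: "bilinear \<omega>" unfolding bilinear_def \<omega>_def
    by (auto intro!: linearI simp: bilinear_ladd[OF bil] bilinear_radd[OF bil]
        bilinear_lmul[OF bil] bilinear_rmul[OF bil] inner_add_left add_divide_distrib)
  have ao: "\<forall>x. \<omega> x x = 0" unfolding \<omega>_def using alt by simp
  have "dim (UNIV :: 'a set) = 2 * (DIM('a) div 2)" using assms(2) by simp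
  from main_ind[OF bo ao subspace_UNIV this] obtain J where lJ: "linear J"
    and J1: "\<forall>x. J (J x) = - x" and J2: "\<forall>x y. \<omega> (J x) (J y) = \<omega> x y" by auto
  have "br (J x) (J y) = br x y" for x y using J2 rep by metis
  then show ?thesis unfolding abelian_complex_structure_def using lJ J1 by blast
qed

end
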